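(* Let $\Omega\subset\mathbb{R}^n$ be a domain and let $\mathcal{S}$ be a valid subdivision for $\Omega$. Let $z_0,z\in\bigcup_{S\in\mathcal{S}}S$ and let $\{S_i:0\le i\le j\}\subset\mathcal{S}$ be a sequence with $z_0\in S_0$, $z\in S_j$, and $\partial S_i\cap\partial S_{i+1}\neq\emptyset$ for $0\le i<j$. Then \[ k(z,z_0;\Omega)\le 2\sum_{i=0}^{j}\frac{d(S_i)}{\delta(S_i)}. \]
   Context: A collection $\mathcal{S}$ of sets is a valid subdivision of a domain $\Omega$ if: each $S\in\mathcal{S}$ is a closed subset of $\Omega$; each $S\in\mathcal{S}$ is star-shaped (with respect to some point of $S$); for distinct $S,T\in\mathcal{S}$, $|S\cap T|=0$ (Lebesgue measure); $|\Omega\setminus\bigcup_{S\in\mathcal{S}}S|=0$; and for every pair $z_0,z\in\bigcup_{S\in\mathcal{S}}S$ there is a finite sequence $S_0,\dots,S_j\in\mathcal{S}$ with $z_0\in S_0$, $z\in S_j$ and $\partial S_i\cap\partial S_{i+1}\ne\emptyset$. For $S\in\mathcal{S}$, $d(S)$ is the diameter of $S$ and $\delta(S)$ is the distance from $S$ to $\partial\Omega$. The quasihyperbolic distance is $k(z,z_0;\Omega)=\inf_\gamma\int_\gamma\frac{d\sigma}{d(\zeta,\partial\Omega)}$ over rectifiable curves $\gamma\subset\Omega$ joining $z$ to $z_0$. *)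

theory Defs
  imports "HOL-Analysis.Analysis"
begin

definition partitions_of :: "real \<Rightarrow> real \<Rightarrow> (nat \<times> (nat \<Rightarrow> real)) set" where
  "partitions_of a b = {(m, t). 0 < m \<and> t 0 = a \<and> t m = b \<and> (\<forall>i<m. t i \<le> t (Suc i))}"

definition curve_length_on :: "(real \<Rightarrow> 'a::euclidean_space) \<Rightarrow> real \<Rightarrow> real \<Rightarrow> ereal" where
  "curve_length_on g a b =
     (SUP p \<in> partitions_of a b. ereal (\<Sum>i<fst p. dist (g (snd p i)) (g (snd p (Suc i)))))"

definition rectifiable_curve :: "(real \<Rightarrow> 'a::euclidean_space) \<Rightarrow> bool" where
  "rectifiable_curve g \<longleftrightarrow> path g \<and> curve_length_on g 0 1 < \<infinity>"

text \<open>Arc-length integral of a nonnegative function f along g over [0,1], defined as the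
  supremum of lower Darboux--Stieltjes sums with respect to arc length.\<close>
definition arclength_integral :: "('a::euclidean_space \<Rightarrow> real) \<Rightarrow> (real \<Rightarrow> 'a) \<Rightarrow> ereal" where
  "arclength_integral f g =
     (SUP p \<in> partitions_of 0 1.
        (\<Sum>i<fst p. ereal (Inf ((f \<circ> g) ` {snd p i .. snd p (Suc i)}))
                     * curve_length_on g (snd p i) (snd p (Suc i))))"

definition qh_dist :: "'a::euclidean_space set \<Rightarrow> 'a \<Rightarrow> 'a \<Rightarrow> ereal" where
  "qh_dist \<Omega> z z0 =
     (INF g \<in> {g. rectifiable_curve g \<and> path_image g \<subseteq> \<Omega> \<and> pathstart g = z \<and> pathfinish g = z0}.
        arclength_integral (\<lambda>\<zeta>. 1 / infdist \<zeta> (frontier \<Omega>)) g)"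

definition valid_subdivision :: "'a::euclidean_space set \<Rightarrow> 'a set set \<Rightarrow> bool" where
  "valid_subdivision \<Omega> \<S> \<longleftrightarrow>
     (\<forall>S\<in>\<S>. S \<subseteq> \<Omega> \<and> closedin (top_of_set \<Omega>) S) \<and>
     (\<forall>S\<in>\<S>. starlike S) \<and>
     (\<forall>S\<in>\<S>. \<forall>T\<in>\<S>. S \<noteq> T \<longrightarrow> S \<inter> T \<in> null_sets lebesgue) \<and>
     \<Omega> - \<Union>\<S> \<in> null_sets lebesgue \<and>
     (\<forall>z0\<in>\<Union>\<S>. \<forall>z\<in>\<Union>\<S>. \<exists>(j::nat) Sq. (\<forall>i\<le>j. Sq i \<in> \<S>) \<and> z0 \<in> Sq 0 \<and> z \<in> Sq j \<and>
          (\<forall>i<j. frontier (Sq i) \<inter> frontier (Sq (Suc i)) \<noteq> {}))"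

text \<open>The quotient d(S)/\<delta>(S) as an extended real: +\<infinity> if S is unbounded or touches
  the boundary (\<delta>(S) = 0); 0 if \<partial>\<Omega> is empty (then \<delta>(S) = \<infinity>).\<close>
definition diam_dist_ratio :: "'a::euclidean_space set \<Rightarrow> 'a set \<Rightarrow> ereal" where
  "diam_dist_ratio \<Omega> S =
     (if frontier \<Omega> = {} then 0
      else if bounded S \<and> setdist S (frontier \<Omega>) > 0
           then ereal (diameter S / setdist S (frontier \<Omega>))
      else \<infinity>)"

end

theory Submission
  imports Defs
begin

lemma partition_mem:
  assumes "\<forall>i<m. t i \<le> (t (Suc i)::real)" "i \<le> m"
  shows "t 0 \<le> t i \<and> t i \<le> t m"
proof -
  have a: "t 0 \<le> t i" if "i \<le> m" for i using that
  proof (induction i)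
    case (Suc i)
    have "t 0 \<le> t i" using Suc by simp
    moreover have "t i \<le> t (Suc i)" using assms(1) Suc.prems by simp
    ultimately show ?case by linarith
  qed simp
  have b: "t (m - k) \<le> t m" if "k \<le> m" for k using that
  proof (induction k)
    case (Suc k)
    have "t (m - Suc k) \<le> t (Suc (m - Suc k))" using assms(1) Suc.prems by simp
    moreover have "Suc (m - Suc k) = m - k" using Suc.prems by simp
    moreover have "t (m - k) \<le> t m" using Suc by simp
    ultimately show ?case by simp
  qed simp
  show ?thesis using a[OF assms(2)] b[of "m - i"] assms(2) by simp
qed

lemma curve_length_lip:
  assumes "\<forall>x\<in>{a..b}. \<forall>y\<in>{a..b}. dist (g x) (g y) \<le> K * \<bar>x - y\<bar>"
  shows "curve_length_on g a b \<le> ereal (K * (b - a))"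
  unfolding curve_length_on_def
proof (rule SUP_least)
  fix p assume "p \<in> partitions_of a b"
  then obtain m t where p: "p = (m, t)" "t 0 = a" "t m = b" "\<forall>i<m. t i \<le> t (Suc i)"
    by (auto simp: partitions_of_def)
  have "(\<Sum>i<m. dist (g (t i)) (g (t (Suc i)))) \<le> (\<Sum>i<m. K * (t (Suc i) - t i))"
  proof (rule sum_mono)
    fix i assume "i \<in> {..<m}"
    then have "t i \<in> {a..b}" "t (Suc i) \<in> {a..b}" "t i \<le> t (Suc i)"
      using partition_mem[OF p(4), of i] partition_mem[OF p(4), of "Suc i"] p by auto
    then show "dist (g (t i)) (g (t (Suc i))) \<le> K * (t (Suc i) - t i)"
      using assms by (metis abs_minus_commute abs_of_nonneg diff_ge_0_iff_ge)
  qed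
  also have "\<dots> = K * (t m - t 0)"
    by (simp add: sum_distrib_left[symmetric] sum_lessThan_telescope)
  finally show "ereal (\<Sum>i<fst p. dist (g (snd p i)) (g (snd p (Suc i)))) \<le> ereal (K * (b - a))"
    using p by simp
qed

lemma integral_split_partition:
  fixes F :: "real \<Rightarrow> real"
  assumes "\<forall>i<m. t i \<le> t (Suc i)" "continuous_on {t 0..t m} F"
  shows "(\<Sum>i<m. integral {t i..t (Suc i)} F) = integral {t 0..t m} F"
  using assms
proof (induction m)
  case 0 then show ?case by simp
next
  case (Suc m)
  have mono: "\<forall>i<m. t i \<le> t (Suc i)" using Suc.prems by simp
  have le: "t 0 \<le> t m" "t m \<le> t (Suc m)" using partition_mem[OF mono, of m] Suc.prems(1) by auto
  have c: "continuous_on {t 0..t m} F" using Suc.prems(2) by (rule continuous_on_subset) (use le in auto)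
  have "(\<Sum>i<Suc m. integral {t i..t (Suc i)} F) = integral {t 0..t m} F + integral {t m..t (Suc m)} F"
    using Suc.IH[OF mono c] by simp
  also have "\<dots> = integral {t 0..t (Suc m)} F"
    by (rule Henstock_Kurzweil_Integration.integral_combine[OF le]) (rule integrable_continuous_real[OF Suc.prems(2)])
  finally show ?case .
qed

lemma arclength_lip:
  assumes lip: "\<forall>x\<in>{0..1}. \<forall>y\<in>{0..1}. dist (g x) (g y) \<le> K * \<bar>x - y\<bar>" and K: "0 \<le> K"
    and cont: "continuous_on {0..1} (f \<circ> g)" and nonneg: "\<forall>t\<in>{0..1}. 0 \<le> f (g t)"
  shows "arclength_integral f g \<le> ereal (K * integral {0..1} (f \<circ> g))"
  unfolding arclength_integral_def
proof (rule SUP_least)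
  fix p assume "p \<in> partitions_of 0 1"
  then obtain m t where p: "p = (m, t)" "t 0 = 0" "t m = 1" "\<forall>i<m. t i \<le> t (Suc i)"
    by (auto simp: partitions_of_def)
  have trm: "ereal (Inf ((f \<circ> g) ` {t i..t (Suc i)})) * curve_length_on g (t i) (t (Suc i))
      \<le> ereal (K * integral {t i..t (Suc i)} (f \<circ> g))" if i: "i < m" for i
  proof -
    have tt: "0 \<le> t i" "t i \<le> t (Suc i)" "t (Suc i) \<le> 1"
      using partition_mem[OF p(4), of i] partition_mem[OF p(4), of "Suc i"] p i by auto
    define I where "I = Inf ((f \<circ> g) ` {t i..t (Suc i)})"
    have I0: "0 \<le> I" unfolding I_def
      by (rule cInf_greatest) (use tt nonneg in auto)
    have Ile: "I \<le> (f \<circ> g) x" if "x \<in> {t i..t (Suc i)}" for x unfolding I_def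
      by (rule cInf_lower) (use that tt nonneg in \<open>auto intro!: bdd_belowI[of _ 0]\<close>)
    have cl: "curve_length_on g (t i) (t (Suc i)) \<le> ereal (K * (t (Suc i) - t i))"
      by (rule curve_length_lip) (use lip tt in auto)
    have "ereal I * curve_length_on g (t i) (t (Suc i)) \<le> ereal I * ereal (K * (t (Suc i) - t i))"
      by (rule ereal_mult_left_mono[OF cl]) (use I0 in simp)
    also have "\<dots> = ereal (K * (I * (t (Suc i) - t i)))" by simp
    also have "I * (t (Suc i) - t i) = integral {t i..t (Suc i)} (\<lambda>_. I)" using tt by simp
    also have "\<dots> \<le> integral {t i..t (Suc i)} (f \<circ> g)"
    proof (rule integral_le)
      show "(f \<circ> g) integrable_on {t i..t (Suc i)}"
        by (rule integrable_continuous_real, rule continuous_on_subset[OF cont]) (use tt in auto)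
    qed (use Ile in auto)
    finally show ?thesis unfolding I_def using K by (simp add: mult_left_mono)
  qed
  have "(\<Sum>i<m. ereal (Inf ((f \<circ> g) ` {t i..t (Suc i)})) * curve_length_on g (t i) (t (Suc i)))
      \<le> (\<Sum>i<m. ereal (K * integral {t i..t (Suc i)} (f \<circ> g)))"
    by (rule sum_mono) (use trm in auto)
  also have "\<dots> = ereal (K * (\<Sum>i<m. integral {t i..t (Suc i)} (f \<circ> g)))"
    by (simp add: sum_distrib_left)
  also have "(\<Sum>i<m. integral {t i..t (Suc i)} (f \<circ> g)) = integral {0..1} (f \<circ> g)"
    using integral_split_partition[OF p(4), of "f \<circ> g"] cont p by simp
  finally show "(\<Sum>i<fst p. ereal (Inf ((f \<circ> g) ` {snd p i..snd p (Suc i)})) *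
                 curve_length_on g (snd p i) (snd p (Suc i))) \<le> ereal (K * integral {0..1} (f \<circ> g))"
    using p by simp
qed

lemma lip_glue:
  fixes g :: "real \<Rightarrow> 'a::metric_space"
  assumes "a \<le> c" "c \<le> b"
    and l1: "\<forall>x\<in>{a..c}. \<forall>y\<in>{a..c}. dist (g x) (g y) \<le> K * \<bar>x - y\<bar>"
    and l2: "\<forall>x\<in>{c..b}. \<forall>y\<in>{c..b}. dist (g x) (g y) \<le> K * \<bar>x - y\<bar>"
  shows "\<forall>x\<in>{a..b}. \<forall>y\<in>{a..b}. dist (g x) (g y) \<le> K * \<bar>x - y\<bar>"
proof -
  have *: "dist (g x) (g y) \<le> K * \<bar>x - y\<bar>" if "x \<in> {a..b}" "y \<in> {a..b}" "x \<le> y" for x y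
  proof (cases "y \<le> c")
    case True
    then have "x \<in> {a..c}" "y \<in> {a..c}" using that by auto
    then show ?thesis using l1 by blast
  next
    case False
    show ?thesis
    proof (cases "c \<le> x")
      case True
      then have "x \<in> {c..b}" "y \<in> {c..b}" using that by auto
      then show ?thesis using l2 by blast
    next
      case False
      have "dist (g x) (g y) \<le> dist (g x) (g c) + dist (g c) (g y)" by (rule dist_triangle)
      note this
      have m: "x \<in> {a..c}" "c \<in> {a..c}" "c \<in> {c..b}" "y \<in> {c..b}"
        using that False \<open>\<not> y \<le> c\<close> assms(1,2) by auto
      have "dist (g x) (g c) \<le> K * \<bar>x - c\<bar>" using l1 m by blast
      moreover have "dist (g c) (g y) \<le> K * \<bar>c - y\<bar>" using l2 m by blast
      ultimately have "dist (g x) (g y) \<le> K * \<bar>x - c\<bar> + K * \<bar>c - y\<bar>"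
        using \<open>dist (g x) (g y) \<le> dist (g x) (g c) + dist (g c) (g y)\<close> by linarith
      then have "dist (g x) (g y) \<le> K * \<bar>x - c\<bar> + K * \<bar>c - y\<bar>" .
      also have "K * \<bar>x - c\<bar> + K * \<bar>c - y\<bar> = K * \<bar>x - y\<bar>" using False \<open>\<not> y \<le> c\<close> by (simp add: algebra_simps)
      finally show ?thesis .
    qed
  qed
  show ?thesis
  proof (intro ballI)
    fix x y assume "x \<in> {a..b}" "y \<in> {a..b}"
    then show "dist (g x) (g y) \<le> K * \<bar>x - y\<bar>"
      using *[of x y] *[of y x] by (cases "x \<le> y") (auto simp: dist_commute abs_minus_commute)
  qed
qed

lemma lip_chain:
  fixes g :: "real \<Rightarrow> 'a::metric_space"
  assumes "\<forall>m<n. \<tau> m \<le> \<tau> (Suc m)"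
    and "\<forall>m<n. \<forall>x\<in>{\<tau> m..\<tau> (Suc m)}. \<forall>y\<in>{\<tau> m..\<tau> (Suc m)}. dist (g x) (g y) \<le> K * \<bar>x - y\<bar>"
  shows "\<forall>x\<in>{\<tau> 0..\<tau> n}. \<forall>y\<in>{\<tau> 0..\<tau> n}. dist (g x) (g y) \<le> K * \<bar>x - y\<bar>"
  using assms
proof (induction n)
  case 0 then show ?case by auto
next
  case (Suc n)
  have mono: "\<forall>i<n. \<tau> i \<le> \<tau> (Suc i)" using Suc.prems by simp
  have le: "\<tau> 0 \<le> \<tau> n" using partition_mem[OF mono, of n] by simp
  have ih: "\<forall>x\<in>{\<tau> 0..\<tau> n}. \<forall>y\<in>{\<tau> 0..\<tau> n}. dist (g x) (g y) \<le> K * \<bar>x - y\<bar>"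
  proof (rule Suc.IH)
    show "\<forall>m<n. \<tau> m \<le> \<tau> (Suc m)" using mono .
    show "\<forall>m<n. \<forall>x\<in>{\<tau> m..\<tau> (Suc m)}. \<forall>y\<in>{\<tau> m..\<tau> (Suc m)}. dist (g x) (g y) \<le> K * \<bar>x - y\<bar>"
      using Suc.prems(2) less_SucI by blast
  qed
  show ?case
    by (rule lip_glue[OF le _ ih]) (use Suc.prems in auto)
qed

lemma polygon:
  fixes q :: "nat \<Rightarrow> 'a::euclidean_space" and w M :: "nat \<Rightarrow> real" and f :: "'a \<Rightarrow> real"
  assumes N: "0 < N"
    and w: "\<forall>m<N. 0 < w m"
    and seg: "\<forall>m<N. closed_segment (q m) (q (Suc m)) \<subseteq> \<Omega>"
    and bnd: "\<forall>m<N. \<forall>x\<in>closed_segment (q m) (q (Suc m)). f x \<le> M m"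
    and len: "\<forall>m<N. dist (q m) (q (Suc m)) \<le> w m"
    and fc: "continuous_on \<Omega> f" and f0: "\<forall>x\<in>\<Omega>. 0 \<le> f x"
  shows "\<exists>g. rectifiable_curve g \<and> path_image g \<subseteq> \<Omega> \<and> pathstart g = q 0 \<and> pathfinish g = q N
           \<and> arclength_integral f g \<le> ereal (\<Sum>m<N. M m * w m)"
proof -
  define W where "W = (\<Sum>k<N. w k)"
  have W0: "0 < W" unfolding W_def using N w by (intro sum_pos) auto
  define \<tau> where "\<tau> m = (\<Sum>k<m. w k) / W" for m
  have t0: "\<tau> 0 = 0" by (simp add: \<tau>_def)
  have tN: "\<tau> N = 1" using W0 by (simp add: \<tau>_def W_def)
  have dt: "\<tau> (Suc m) - \<tau> m = w m / W" for m by (simp add: \<tau>_def add_divide_distrib)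
  have tpos: "\<tau> m < \<tau> (Suc m)" if "m < N" for m
  proof -
    have "0 < w m / W" using w that W0 by simp
    then show ?thesis using dt[of m] by linarith
  qed
  have tmono: "\<tau> (Suc m) \<le> \<tau> k" if "m < k" "k \<le> N" for m k
  proof -
    have "(\<Sum>i<Suc m. w i) \<le> (\<Sum>i<k. w i)"
      by (rule sum_mono2) (use that in \<open>auto intro!: less_imp_le w[rule_format]\<close>)
    then show ?thesis unfolding \<tau>_def using W0 by (simp add: divide_right_mono)
  qed
  define sg where "sg m t = q m + ((t - \<tau> m) / (\<tau> (Suc m) - \<tau> m)) *\<^sub>R (q (Suc m) - q m)" for m t
  define idx where "idx t = Max {m. m < N \<and> \<tau> m \<le> t}" for t
  define g where "g t = sg (idx t) t" for t
  have idx: "idx t \<in> {m. m < N \<and> \<tau> m \<le> t} \<and> (\<forall>k. k < N \<and> \<tau> k \<le> t \<longrightarrow> k \<le> idx t)"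
    if "\<tau> m \<le> t" "m < N" for m t
  proof -
    have fin: "finite {m. m < N \<and> \<tau> m \<le> t}" by simp
    have ne: "{m. m < N \<and> \<tau> m \<le> t} \<noteq> {}" using that by auto
    show ?thesis unfolding idx_def using Max_in[OF fin ne] Max_ge[OF fin] by auto
  qed
  have gm: "g t = sg m t" if m: "m < N" and t: "t \<in> {\<tau> m..\<tau> (Suc m)}" for m t
  proof (cases "t < \<tau> (Suc m)")
    case True
    have "idx t = m"
    proof -
      have "idx t \<ge> m" using idx[of m t] m t by auto
      moreover have "\<not> idx t > m"
      proof
        assume "idx t > m"
        then have "\<tau> (Suc m) \<le> \<tau> (idx t)" using tmono idx[of m t] m t by auto
        then show False using idx[of m t] m t True by auto
      qed
      ultimately show ?thesis by simp
    qed
    then show ?thesis by (simp add: g_def)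
  next
    case False
    then have teq: "t = \<tau> (Suc m)" using t by auto
    have sgm: "sg m t = q (Suc m)" using tpos[OF m] by (simp add: sg_def teq)
    show ?thesis
    proof (cases "Suc m < N")
      case True
      have "idx t = Suc m"
      proof -
        have "idx t \<ge> Suc m" using idx[of "Suc m" t] True teq by auto
        moreover have "\<not> idx t > Suc m"
        proof
          assume "idx t > Suc m"
          then have "\<tau> (Suc (Suc m)) \<le> \<tau> (idx t)" using tmono idx[of "Suc m" t] True teq by auto
          then show False using idx[of "Suc m" t] True teq tpos[OF True] by auto
        qed
        ultimately show ?thesis by simp
      qed
      then show ?thesis using sgm teq by (simp add: g_def sg_def)
    next
      case False
      have "idx t = m"
      proof -
        have "idx t \<ge> m" using idx[of m t] m t by auto
        moreover have "idx t < N" using idx[of m t] m t by auto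
        ultimately show ?thesis using False by simp
      qed
      then show ?thesis by (simp add: g_def)
    qed
  qed
  have cover: "\<exists>m<N. t \<in> {\<tau> m..\<tau> (Suc m)}" if "t \<in> {0..1}" for t
  proof -
    have i: "idx t < N" "\<tau> (idx t) \<le> t" "\<forall>k. k < N \<and> \<tau> k \<le> t \<longrightarrow> k \<le> idx t"
      using idx[of 0 t] that N t0 by auto
    have "t \<le> \<tau> (Suc (idx t))"
    proof (cases "Suc (idx t) < N")
      case True then show ?thesis using i(3)[rule_format, of "Suc (idx t)"] by force
    next
      case False then have "Suc (idx t) = N" using i by simp
      then show ?thesis using tN that by simp
    qed
    then show ?thesis using i by auto
  qed
  have sgseg: "sg m t \<in> closed_segment (q m) (q (Suc m))" if m: "m < N" and t: "t \<in> {\<tau> m..\<tau> (Suc m)}" for m t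
  proof -
    define u where "u = (t - \<tau> m) / (\<tau> (Suc m) - \<tau> m)"
    have u: "0 \<le> u" "u \<le> 1" using t tpos[OF m] by (auto simp: u_def divide_simps)
    have "sg m t = (1 - u) *\<^sub>R q m + u *\<^sub>R q (Suc m)"
      by (simp add: sg_def u_def[symmetric] algebra_simps)
    then show ?thesis using u by (auto simp: in_segment)
  qed
  have gseg: "g t \<in> closed_segment (q m) (q (Suc m))" if "m < N" "t \<in> {\<tau> m..\<tau> (Suc m)}" for m t
    using gm[OF that] sgseg[OF that] by simp
  have lipm: "\<forall>x\<in>{\<tau> m..\<tau> (Suc m)}. \<forall>y\<in>{\<tau> m..\<tau> (Suc m)}. dist (g x) (g y) \<le> W * \<bar>x - y\<bar>"
    if m: "m < N" for m
  proof (intro ballI)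
    fix x y assume x: "x \<in> {\<tau> m..\<tau> (Suc m)}" and y: "y \<in> {\<tau> m..\<tau> (Suc m)}"
    define D where "D = \<tau> (Suc m) - \<tau> m"
    have D: "D = w m / W" "0 < D" using dt[of m] tpos[OF m] by (simp_all add: D_def)
    have "g x - g y = ((x - \<tau> m) / D - (y - \<tau> m) / D) *\<^sub>R (q (Suc m) - q m)"
      unfolding gm[OF m x] gm[OF m y] sg_def D_def by (simp add: scaleR_diff_left)
    also have "(x - \<tau> m) / D - (y - \<tau> m) / D = (x - y) / D" by (simp add: diff_divide_distrib)
    finally have "g x - g y = ((x - y) / D) *\<^sub>R (q (Suc m) - q m)" .
    then have "dist (g x) (g y) = \<bar>(x - y) / D\<bar> * dist (q m) (q (Suc m))"
      by (simp only: dist_norm norm_scaleR norm_minus_commute)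
    also have "\<bar>(x - y) / D\<bar> = \<bar>x - y\<bar> / D" using D(2) by (simp add: abs_divide)
    also have "\<bar>x - y\<bar> / D * dist (q m) (q (Suc m)) \<le> \<bar>x - y\<bar> / D * w m"
      using len m D(2) by (intro mult_left_mono) auto
    also have "\<bar>x - y\<bar> / D * w m = W * \<bar>x - y\<bar>" proof -
      have "0 < w m" using w m by simp
      then show ?thesis using W0 unfolding D(1) by (simp add: field_simps)
    qed
    finally show "dist (g x) (g y) \<le> W * \<bar>x - y\<bar>" .
  qed
  have lip: "\<forall>x\<in>{0..1}. \<forall>y\<in>{0..1}. dist (g x) (g y) \<le> W * \<bar>x - y\<bar>"
  proof -
    have "\<forall>x\<in>{\<tau> 0..\<tau> N}. \<forall>y\<in>{\<tau> 0..\<tau> N}. dist (g x) (g y) \<le> W * \<bar>x - y\<bar>"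
    proof (rule lip_chain)
      show "\<forall>m<N. \<tau> m \<le> \<tau> (Suc m)" using tpos less_imp_le by blast
      show "\<forall>m<N. \<forall>x\<in>{\<tau> m..\<tau> (Suc m)}. \<forall>y\<in>{\<tau> m..\<tau> (Suc m)}. dist (g x) (g y) \<le> W * \<bar>x - y\<bar>"
        using lipm by blast
    qed
    then show ?thesis using t0 tN by simp
  qed
  have gc: "continuous_on {0..1} g"
  proof (rule lipschitz_on_continuous_on[of W])
    show "lipschitz_on W {0..1} g" unfolding lipschitz_on_def dist_real_def using lip W0 by simp
  qed
  have gimg: "g t \<in> \<Omega>" if t01: "t \<in> {0..1}" for t
  proof -
    obtain m where m: "m < N" "t \<in> {\<tau> m..\<tau> (Suc m)}" using cover[OF t01] by blast
    show ?thesis using gseg[OF m] seg m(1) by blast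
  qed
  have Fc: "continuous_on {0..1} (f \<circ> g)"
    by (rule continuous_on_compose[OF gc]) (rule continuous_on_subset[OF fc], use gimg in auto)
  have F0: "\<forall>t\<in>{0..1}. 0 \<le> f (g t)" using gimg f0 by auto
  have mono: "\<forall>i<N. \<tau> i \<le> \<tau> (Suc i)" using tpos less_imp_le by blast
  have "integral {0..1} (f \<circ> g) = (\<Sum>m<N. integral {\<tau> m..\<tau> (Suc m)} (f \<circ> g))"
    using integral_split_partition[OF mono, of "f \<circ> g"] Fc t0 tN by simp
  also have "\<dots> \<le> (\<Sum>m<N. M m * (w m / W))"
  proof (rule sum_mono)
    fix m assume "m \<in> {..<N}"
    then have m: "m < N" by simp
    have sub: "{\<tau> m..\<tau> (Suc m)} \<subseteq> {0..1}"
      using partition_mem[OF mono, of m] partition_mem[OF mono, of "Suc m"] m t0 tN by auto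
    have "integral {\<tau> m..\<tau> (Suc m)} (f \<circ> g) \<le> integral {\<tau> m..\<tau> (Suc m)} (\<lambda>_. M m)"
    proof (rule integral_le)
      show "(f \<circ> g) integrable_on {\<tau> m..\<tau> (Suc m)}"
        by (rule integrable_continuous_real, rule continuous_on_subset[OF Fc sub])
      show "(f \<circ> g) x \<le> M m" if "x \<in> {\<tau> m..\<tau> (Suc m)}" for x
        using bnd gseg[OF m that] m by auto
    qed auto
    also have "\<dots> = M m * (w m / W)" using tpos[OF m] dt[of m] by simp
    finally show "integral {\<tau> m..\<tau> (Suc m)} (f \<circ> g) \<le> M m * (w m / W)" .
  qed
  finally have I: "integral {0..1} (f \<circ> g) \<le> (\<Sum>m<N. M m * (w m / W))" .
  have A1: "arclength_integral f g \<le> ereal (W * integral {0..1} (f \<circ> g))"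
    by (rule arclength_lip[OF lip _ Fc F0]) (use W0 in simp)
  have "W * integral {0..1} (f \<circ> g) \<le> W * (\<Sum>m<N. M m * (w m / W))"
    by (rule mult_left_mono[OF I]) (use W0 in simp)
  also have "W * (\<Sum>m<N. M m * (w m / W)) = (\<Sum>m<N. M m * w m)"
    using W0 by (simp add: sum_distrib_left)
  finally have A2: "W * integral {0..1} (f \<circ> g) \<le> (\<Sum>m<N. M m * w m)" .
  have A: "arclength_integral f g \<le> ereal (\<Sum>m<N. M m * w m)"
    using A1 A2 by (meson ereal_less_eq(3) order_trans)
  have "curve_length_on g 0 1 \<le> ereal (W * (1 - 0))"
    by (rule curve_length_lip) (use lip in simp)
  then have rc: "rectifiable_curve g"
    unfolding rectifiable_curve_def path_def using gc by (auto simp: le_less_trans)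
  have ps: "pathstart g = q 0"
    using gm[of 0 0] N t0 tpos[OF N] by (simp add: pathstart_def sg_def)
  have pf: "pathfinish g = q N"
  proof -
    have "g (\<tau> (Suc (N - 1))) = sg (N - 1) (\<tau> (Suc (N - 1)))"
      by (rule gm) (use N tpos[of "N - 1"] in auto)
    then show ?thesis using N tN tpos[of "N - 1"] by (simp add: pathfinish_def sg_def)
  qed
  show ?thesis
    by (rule exI[of _ g]) (use rc gimg ps pf A in \<open>auto simp: path_image_def\<close>)
qed

lemma sum_div2:
  fixes h :: "nat \<Rightarrow> real"
  shows "(\<Sum>m<2*n. h (m div 2)) = 2 * (\<Sum>i<n. h i)"
proof (induction n)
  case 0 then show ?case by simp
next
  case (Suc n)
  have e: "2 * Suc n = Suc (Suc (2 * n))" by simp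
  have "(\<Sum>m<2 * Suc n. h (m div 2)) = (\<Sum>m<2*n. h (m div 2)) + h n + h n"
    unfolding e by simp
  then show ?case using Suc by simp
qed

theorem mainTheorem3:
  fixes \<Omega> :: "'a::euclidean_space set" and \<S> :: "'a set set"
    and z0 z :: 'a and Sq :: "nat \<Rightarrow> 'a set" and j :: nat
  assumes "open \<Omega>" and "connected \<Omega>"
    and "valid_subdivision \<Omega> \<S>"
    and "z0 \<in> \<Union>\<S>" and "z \<in> \<Union>\<S>"
    and "\<forall>i\<le>j. Sq i \<in> \<S>"
    and "z0 \<in> Sq 0" and "z \<in> Sq j"
    and "\<forall>i<j. frontier (Sq i) \<inter> frontier (Sq (Suc i)) \<noteq> {}"
  shows "qh_dist \<Omega> z z0 \<le> 2 * (\<Sum>i\<le>j. diam_dist_ratio \<Omega> (Sq i))"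
proof -
  have SO: "\<forall>S\<in>\<S>. S \<subseteq> \<Omega> \<and> closedin (top_of_set \<Omega>) S" and star: "\<forall>S\<in>\<S>. starlike S"
    using assms(3) unfolding valid_subdivision_def by auto
  have Sq: "Sq i \<in> \<S>" if "i \<le> j" for i using assms(6) that by auto
  have SqO: "Sq i \<subseteq> \<Omega>" if "i \<le> j" for i using SO Sq[OF that] by auto
  define f where "f \<zeta> = 1 / infdist \<zeta> (frontier \<Omega>)" for \<zeta>
  have qle: "qh_dist \<Omega> z z0 \<le> arclength_integral f g"
    if "rectifiable_curve g" "path_image g \<subseteq> \<Omega>" "pathstart g = z" "pathfinish g = z0" for g
    unfolding qh_dist_def f_def by (rule INF_lower) (use that in auto)
  show ?thesis
  proof (cases "frontier \<Omega> = {}")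
    case True
    have "z0 \<in> \<Omega>" using assms(4) SO by blast
    then have U: "\<Omega> = UNIV" using True frontier_eq_empty[of \<Omega>] by blast
    have f0: "f = (\<lambda>_. 0)" using True by (simp add: infdist_def f_def fun_eq_iff)
    define q1 where "q1 m = (if m = 0 then z else z0)" for m :: nat
    have P1: "\<forall>m<1. 0 < (\<lambda>_::nat. dist z z0 + 1) m"
    proof -
      have "0 < dist z z0 + 1" using zero_le_dist[of z z0] by linarith
      then show ?thesis by simp
    qed
    have P2: "\<forall>m<1. closed_segment (q1 m) (q1 (Suc m)) \<subseteq> \<Omega>" using U by simp
    have P3: "\<forall>m<1. \<forall>x\<in>closed_segment (q1 m) (q1 (Suc m)). f x \<le> (\<lambda>_. 0) m" using f0 by simp
    have P4: "\<forall>m<1. dist (q1 m) (q1 (Suc m)) \<le> (\<lambda>_::nat. dist z z0 + 1) m" by (simp add: q1_def)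
    have fc: "continuous_on \<Omega> f" using f0 by simp
    have f00: "\<forall>x\<in>\<Omega>. 0 \<le> f x" using f0 by simp
    obtain g where g: "rectifiable_curve g" "path_image g \<subseteq> \<Omega>"
       "pathstart g = q1 0" "pathfinish g = q1 1"
       "arclength_integral f g \<le> ereal (\<Sum>m<1. (\<lambda>_. 0) m * (\<lambda>_::nat. dist z z0 + 1) m)"
      using polygon[OF _ P1 P2 P3 P4 fc f00] by auto
    have gg: "pathstart g = z" "pathfinish g = z0" using g(3,4) by (simp_all add: q1_def)
    have "qh_dist \<Omega> z z0 \<le> 0" using qle[OF g(1,2) gg] g(5) by (simp add: zero_ereal_def)
    moreover have "(\<Sum>i\<le>j. diam_dist_ratio \<Omega> (Sq i)) = 0" using True by (simp add: diam_dist_ratio_def)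
    ultimately show ?thesis by simp
  next
    case False
    note fne = False
    show ?thesis
    proof (cases "\<exists>i\<le>j. \<not> (bounded (Sq i) \<and> setdist (Sq i) (frontier \<Omega>) > 0)")
      case True
      then obtain i where i: "i \<le> j" "\<not> (bounded (Sq i) \<and> setdist (Sq i) (frontier \<Omega>) > 0)" by blast
      have "diam_dist_ratio \<Omega> (Sq i) = \<infinity>" using i fne by (simp add: diam_dist_ratio_def)
      then have "(\<Sum>i\<le>j. diam_dist_ratio \<Omega> (Sq i)) = \<infinity>" using i by (subst sum_Pinfty) auto
      then show ?thesis by simp
    next
      case False
      then have bd: "bounded (Sq i)" "0 < setdist (Sq i) (frontier \<Omega>)" if "i \<le> j" for i
        using that by auto
      define d where "d i = diameter (Sq i)" for i
      define \<delta> where "\<delta> i = setdist (Sq i) (frontier \<Omega>)" for i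
      have "(\<Sum>i\<le>j. diam_dist_ratio \<Omega> (Sq i)) = (\<Sum>i\<le>j. ereal (d i / \<delta> i))"
        by (rule sum.cong) (use bd fne in \<open>auto simp: diam_dist_ratio_def d_def \<delta>_def\<close>)
      then have rhs: "2 * (\<Sum>i\<le>j. diam_dist_ratio \<Omega> (Sq i)) = ereal (2 * (\<Sum>i\<le>j. d i / \<delta> i))"
        by simp
      have cl: "closed (Sq i)" if i: "i \<le> j" for i
      proof -
        have sub: "Sq i \<subseteq> \<Omega>" and ci: "closedin (top_of_set \<Omega>) (Sq i)" using SO Sq[OF i] by auto
        obtain T where T: "closed T" "Sq i = \<Omega> \<inter> T" using ci by (auto simp: closedin_closed)
        have cT: "closure (Sq i) \<subseteq> T" using T by (intro closure_minimal) auto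
        have "closure (Sq i) \<subseteq> Sq i"
        proof
          fix x assume x: "x \<in> closure (Sq i)"
          have "x \<in> \<Omega>"
          proof (rule ccontr)
            assume "x \<notin> \<Omega>"
            moreover have "x \<in> closure \<Omega>" using x sub closure_mono by blast
            ultimately have "x \<in> frontier \<Omega>" using assms(1) by (simp add: frontier_def interior_open)
            then have "setdist (closure (Sq i)) (frontier \<Omega>) \<le> dist x x" using x by (intro setdist_le_dist)
            then show False using bd(2)[OF i] by simp
          qed
          then show "x \<in> Sq i" using T cT x by auto
        qed
        then show ?thesis using closure_subset_eq by blast
      qed
      have idb: "\<delta> i \<le> infdist x (frontier \<Omega>)" if "i \<le> j" "x \<in> Sq i" for i x
        unfolding \<delta>_def infdist_eq_setdist using that by (intro setdist_subset_left) auto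
      have fb: "f x \<le> 1 / \<delta> i" if "i \<le> j" "x \<in> Sq i" for i x
        unfolding f_def using idb[OF that] bd(2)[OF that(1)] by (intro frac_le) (auto simp: \<delta>_def)
      have Ofr: "x \<notin> frontier \<Omega>" if "x \<in> \<Omega>" for x using that assms(1) by (simp add: frontier_def interior_open)
      have ipos: "0 < infdist x (frontier \<Omega>)" if "x \<in> \<Omega>" for x
        by (rule infdist_pos_not_in_closed) (use fne Ofr[OF that] in auto)
      have fc: "continuous_on \<Omega> f" unfolding f_def
        by (intro continuous_intros) (use ipos in force)
      have f0: "\<forall>x\<in>\<Omega>. 0 \<le> f x" by (simp add: f_def infdist_nonneg)
      have "\<forall>i. \<exists>x. i < j \<longrightarrow> x \<in> frontier (Sq i) \<inter> frontier (Sq (Suc i))" using assms(9) by blast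
      from choice[OF this] obtain wp where wp: "\<forall>i. i < j \<longrightarrow> wp i \<in> frontier (Sq i) \<inter> frontier (Sq (Suc i))"
        by blast
      have "\<forall>i. \<exists>a. i \<le> j \<longrightarrow> a \<in> Sq i \<and> (\<forall>x\<in>Sq i. closed_segment a x \<subseteq> Sq i)"
        using star Sq unfolding starlike_def by blast
      from choice[OF this] obtain c where c: "\<forall>i. i \<le> j \<longrightarrow> c i \<in> Sq i \<and> (\<forall>x\<in>Sq i. closed_segment (c i) x \<subseteq> Sq i)"
        by blast
      have frS: "frontier (Sq i) \<subseteq> Sq i" if "i \<le> j" for i using frontier_subset_closed[OF cl[OF that]] .
      define N where "N = 2 * j + 2"
      define p where "p m = (if m = N then z else if even m then (if m = 0 then z0 else wp (m div 2 - 1)) else c (m div 2))" for m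
      have pseg: "closed_segment (p m) (p (Suc m)) \<subseteq> Sq (m div 2)" if m: "m < N" for m
      proof (cases "even m")
        case True
        have k: "m div 2 \<le> j" using m True by (auto simp: N_def)
        have pm: "p m \<in> Sq (m div 2)"
        proof (cases "m = 0")
          case True then show ?thesis using assms(7) by (simp add: p_def N_def)
        next
          case False
          have a: "m div 2 - 1 < j" "Suc (m div 2 - 1) = m div 2" using False True k by auto
          have "wp (m div 2 - 1) \<in> frontier (Sq (m div 2))" using wp a by (metis IntD2)
          then have "wp (m div 2 - 1) \<in> Sq (m div 2)" using frS[OF k] by blast
          then show ?thesis using False True m by (simp add: p_def)
        qed
        have ps: "p (Suc m) = c (m div 2)" using True m by (auto simp: p_def N_def)
        show ?thesis using c k pm ps by (simp add: closed_segment_commute)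
      next
        case False
        have k: "m div 2 \<le> j" using m by (auto simp: N_def)
        have pm: "p m = c (m div 2)" using False m by (auto simp: p_def)
        have ps: "p (Suc m) \<in> Sq (m div 2)"
        proof (cases "Suc m = N")
          case True
          then have "m div 2 = j" using False by (auto simp: N_def)
          then show ?thesis using True assms(8) by (simp add: p_def)
        next
          case F2: False
          have a: "m div 2 < j" using m F2 False unfolding N_def by presburger
          have b: "Suc m div 2 - 1 = m div 2" using False by auto
          have "wp (m div 2) \<in> Sq (m div 2)" using wp a frS[OF k] by blast
          then show ?thesis using F2 False b by (simp add: p_def)
        qed
        show ?thesis using c k pm ps by simp
      qed
      define q where "q m = p (N - m)" for m
      define kk where "kk m = (N - Suc m) div 2" for m
      have qseg: "closed_segment (q m) (q (Suc m)) \<subseteq> Sq (kk m)" if "m < N" for m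
      proof -
        have e: "N - m = Suc (N - Suc m)" using that by simp
        have "N - Suc m < N" using that by simp
        from pseg[OF this] show ?thesis unfolding q_def kk_def e by (simp add: closed_segment_commute)
      qed
      have kkj: "kk m \<le> j" if "m < N" for m
      proof -
        have "(N - Suc m) div 2 \<le> (2 * j + 1) div 2" by (rule div_le_mono) (simp add: N_def)
        then show ?thesis by (simp add: kk_def)
      qed
      define C where "C = 2 * (\<Sum>i\<le>j. 1 / \<delta> i)"
      have C0: "0 \<le> C" unfolding C_def using bd(2) by (intro mult_nonneg_nonneg sum_nonneg) (auto simp: \<delta>_def)
      have main: "qh_dist \<Omega> z z0 \<le> ereal (2 * (\<Sum>i\<le>j. d i / \<delta> i) + \<epsilon> * C)" if \<epsilon>: "0 < \<epsilon>" for \<epsilon>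
      proof -
        have P1: "\<forall>m<N. 0 < d (kk m) + \<epsilon>"
          using kkj bd(1) \<epsilon> by (auto simp: d_def intro!: add_nonneg_pos diameter_ge_0)
        have P2: "\<forall>m<N. closed_segment (q m) (q (Suc m)) \<subseteq> \<Omega>"
          using qseg kkj SqO by blast
        have P3: "\<forall>m<N. \<forall>x\<in>closed_segment (q m) (q (Suc m)). f x \<le> 1 / \<delta> (kk m)"
          using qseg kkj fb by blast
        have P4: "\<forall>m<N. dist (q m) (q (Suc m)) \<le> d (kk m) + \<epsilon>"
        proof (intro allI impI)
          fix m assume m: "m < N"
          have "q m \<in> Sq (kk m)" "q (Suc m) \<in> Sq (kk m)" using qseg[OF m] ends_in_segment by blast+
          then have "dist (q m) (q (Suc m)) \<le> d (kk m)"
            unfolding d_def by (intro diameter_bounded_bound bd(1) kkj m)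
          then show "dist (q m) (q (Suc m)) \<le> d (kk m) + \<epsilon>" using \<epsilon> by simp
        qed
        have N0: "0 < N" by (simp add: N_def)
        obtain g where g: "rectifiable_curve g" "path_image g \<subseteq> \<Omega>" "pathstart g = q 0" "pathfinish g = q N"
            "arclength_integral f g \<le> ereal (\<Sum>m<N. (1 / \<delta> (kk m)) * (d (kk m) + \<epsilon>))"
          using polygon[where N=N and w="\<lambda>m. d (kk m) + \<epsilon>" and q=q and \<Omega>=\<Omega> and f=f
              and M="\<lambda>m. 1 / \<delta> (kk m)", OF N0 P1 P2 P3 P4 fc f0] by blast
        have q0: "q 0 = z" by (simp add: q_def p_def)
        have qN: "q N = z0" by (simp add: q_def p_def N_def)
        define h where "h i = (1 / \<delta> i) * (d i + \<epsilon>)" for i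
        have "(\<Sum>m<N. (1 / \<delta> (kk m)) * (d (kk m) + \<epsilon>)) = (\<Sum>m<N. h ((N - Suc m) div 2))"
          by (simp add: h_def kk_def)
        also have "\<dots> = (\<Sum>m<N. h (m div 2))"
          by (rule sum.nat_diff_reindex)
        also have "\<dots> = 2 * (\<Sum>i<Suc j. h i)"
          using sum_div2[of h "Suc j"] by (simp add: N_def)
        also have "(\<Sum>i<Suc j. h i) = (\<Sum>i\<le>j. d i / \<delta> i + \<epsilon> * (1 / \<delta> i))"
          unfolding lessThan_Suc_atMost by (rule sum.cong) (auto simp: h_def distrib_left)
        also have "\<dots> = (\<Sum>i\<le>j. d i / \<delta> i) + \<epsilon> * (\<Sum>i\<le>j. 1 / \<delta> i)"
          by (simp add: sum.distrib sum_distrib_left)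
        also have "2 * ((\<Sum>i\<le>j. d i / \<delta> i) + \<epsilon> * (\<Sum>i\<le>j. 1 / \<delta> i)) = 2 * (\<Sum>i\<le>j. d i / \<delta> i) + \<epsilon> * C"
          by (simp add: C_def algebra_simps)
        finally have S: "(\<Sum>m<N. (1 / \<delta> (kk m)) * (d (kk m) + \<epsilon>)) = 2 * (\<Sum>i\<le>j. d i / \<delta> i) + \<epsilon> * C" .
        show ?thesis using qle[OF g(1,2)] g(3,4,5) q0 qN S by (metis order_trans)
      qed
      have "qh_dist \<Omega> z z0 \<le> ereal (2 * (\<Sum>i\<le>j. d i / \<delta> i))"
      proof (rule ereal_le_epsilon2)
        fix e :: real assume e: "0 < e"
        define \<epsilon> where "\<epsilon> = e / (C + 1)"
        have \<epsilon>0: "0 < \<epsilon>" using e C0 by (simp add: \<epsilon>_def)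
        have "\<epsilon> * C \<le> e" using e C0 by (simp add: \<epsilon>_def field_simps)
        then have "ereal (2 * (\<Sum>i\<le>j. d i / \<delta> i) + \<epsilon> * C) \<le> ereal (2 * (\<Sum>i\<le>j. d i / \<delta> i)) + ereal e"
          by simp
        then show "qh_dist \<Omega> z z0 \<le> ereal (2 * (\<Sum>i\<le>j. d i / \<delta> i)) + ereal e"
          using main[OF \<epsilon>0] by (rule order_trans[rotated])
      qed
      then show ?thesis using rhs by simp
    qed
  qed
qed

end
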